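(* Let $t\in\{w,m\}$ index two types with masses $\mu_w>0,\mu_m>0$, $r:=\mu_w/\mu_m$. Suppose there are parameters $r^e_t\in(0,1)$, $c_t\ge0$, $C_t>0$ ($t\in\{w,m\}$) such that for all $u\in(0,1)$, $$h_t(u)=\frac{c_t}{u},\qquad F_{\Delta_t}^{-1}(1-u)=C_t\,\frac{r^e_t-u}{u(1-u)},$$ where $F_{\Delta_t}$ is the cumulative distribution function of the sector-1 advantage $\Delta_t=Y_{1t}-Y_{2t}$. Let $\gamma_w:=\frac{\mu_m}{\mu_w}\frac{c_w}{C_w}$ and $\gamma_m:=\frac{\mu_w}{\mu_m}\frac{c_m}{C_m}$. If $0<r^e_w<r^e_m<1$ and $\gamma_w+\gamma_m<1$, then there is a unique equilibrium $(r_w^*,r_m^* )$, and: (1) if $\bar\gamma:=\max\{\gamma_w r^e_m/r^e_w+\gamma_m,\ \gamma_w+\gamma_m(1-r^e_w)/(1-r^e_m)\}<1$, then $$r_w^*=r_w^e-\frac{\gamma_w}{1-\gamma_w-\gamma_m}(r_m^e-r_w^e),\qquad r_m^*=r_m^e+\frac{\gamma_m}{1-\gamma_w-\gamma_m}(r_m^e-r_w^e);$$ (2) if $\gamma_w r^e_m/r^e_w+\gamma_m\ge1$ and $\gamma_m<1-r^e_m$, then $r_w^*=0$ and $r_m^*=r^e_m/(1-\gamma_m)$; (3) if $\gamma_w<r^e_w$ and $\gamma_w+\gamma_m(1-r^e_w)/(1-r^e_m)\ge1$, then $r_w^*=(r^e_w-\gamma_w)/(1-\gamma_w)$ and $r_m^*=1$;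 (4) if $\gamma_w\ge r^e_w$ and $\gamma_m\ge1-r^e_m$, then $r_w^*=0$ and $r_m^*=1$.
   Context: For $x,y\in(0,1)$, $z>0$, define $g_t(x,y,z):=h_t\left(\frac{1}{1+z y/x}\right)-h_t\left(\frac{1}{1+z(1-y)/(1-x)}\right)$. A composition is a pair $(r_w,r_m)\in[0,1]^2$, $r_t$ being the share of type-$t$ individuals choosing sector 1. An equilibrium is a composition $(r_w^*,r_m^* )$ such that: (i) if $r_w^*\in(0,1)$ then $F_{\Delta_w}^{-1}(1-r_w^* )=g_w(r_w^*,r_m^*,1/r)$, and if $r_m^*\in(0,1)$ then $F_{\Delta_m}^{-1}(1-r_m^* )=g_m(r_m^*,r_w^*,r)$; (ii) if $r_w^*=0$, there is $\bar\delta>0$ such that for all $0<\delta<\bar\delta$, $F_{\Delta_w}^{-1}(1-\delta)\le g_w(\delta,r_m^*,1/r)$; (iii) if $r_m^*=1$, there is $\bar\delta>0$ such that for all $0<\delta<\bar\delta$, $F_{\Delta_m}^{-1}(\delta)\ge g_m(1-\delta,r_w^*,r)$; (iv) symmetrically, if $r_w^*=1$, there is $\bar\delta>0$ such that for all $0<\delta<\bar\delta$, $F_{\Delta_w}^{-1}(\delta)\ge g_w(1-\delta,r_m^*,1/r)$, and if $r_m^*=0$, there is $\bar\delta>0$ such that for all $0<\delta<\bar\delta$, $F_{\Delta_m}^{-1}(1-\delta)\le g_m(\delta,r_w^*,r)$. *)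

theory Defs
  imports Complex_Main
begin

definition gfun :: "(real \<Rightarrow> real) \<Rightarrow> real \<Rightarrow> real \<Rightarrow> real \<Rightarrow> real" where
  "gfun h x y z = h (1 / (1 + z * y / x)) - h (1 / (1 + z * (1 - y) / (1 - x)))"

text \<open>Equilibrium composition (rw, rm). hw, hm are h_w, h_m; Fw, Fm are the
  quantile functions F_{Delta_w}^{-1}, F_{Delta_m}^{-1}; r = mu_w / mu_m.\<close>
definition equilibrium ::
  "(real \<Rightarrow> real) \<Rightarrow> (real \<Rightarrow> real) \<Rightarrow> (real \<Rightarrow> real) \<Rightarrow> (real \<Rightarrow> real) \<Rightarrow> real \<Rightarrow> real \<Rightarrow> real \<Rightarrow> bool" where
  "equilibrium hw hm Fw Fm r rw rm \<longleftrightarrow>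
     rw \<in> {0..1} \<and> rm \<in> {0..1} \<and>
     (rw \<in> {0<..<1} \<longrightarrow> Fw (1 - rw) = gfun hw rw rm (1 / r)) \<and>
     (rm \<in> {0<..<1} \<longrightarrow> Fm (1 - rm) = gfun hm rm rw r) \<and>
     (rw = 0 \<longrightarrow> (\<exists>db>0. \<forall>d. 0 < d \<and> d < db \<longrightarrow> Fw (1 - d) \<le> gfun hw d rm (1 / r))) \<and>
     (rm = 1 \<longrightarrow> (\<exists>db>0. \<forall>d. 0 < d \<and> d < db \<longrightarrow> Fm d \<ge> gfun hm (1 - d) rw r)) \<and>
     (rw = 1 \<longrightarrow> (\<exists>db>0. \<forall>d. 0 < d \<and> d < db \<longrightarrow> Fw d \<ge> gfun hw (1 - d) rm (1 / r))) \<and>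
     (rm = 0 \<longrightarrow> (\<exists>db>0. \<forall>d. 0 < d \<and> d < db \<longrightarrow> Fm (1 - d) \<le> gfun hm d rw r))"

end

theory Submission
  imports Defs
begin

definition eqR :: "real \<Rightarrow> real \<Rightarrow> real \<Rightarrow> real \<Rightarrow> real \<Rightarrow> real \<Rightarrow> bool" where
  "eqR a b x y rw rm \<longleftrightarrow> rw \<in> {0..1} \<and> rm \<in> {0..1} \<and>
    (rw \<in> {0<..<1} \<longrightarrow> a - rw = x * (rm - rw)) \<and>
    (rm \<in> {0<..<1} \<longrightarrow> (1 - b) - (1 - rm) = y * ((1 - rw) - (1 - rm))) \<and>
    (rw = 0 \<longrightarrow> a \<le> x * rm) \<and>
    (rm = 1 \<longrightarrow> 1 - b \<le> y * (1 - rw)) \<and>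
    (rw = 1 \<longrightarrow> 1 - a \<le> x * (1 - rm)) \<and>
    (rm = 0 \<longrightarrow> b \<le> y * rw)"

lemma excl_exh:
  fixes a b x y :: real
  assumes "0 < a" "a < b" "b < 1" "0 \<le> x" "0 \<le> y" "x + y < 1"
  shows "(x*b < a*(1-y) \<and> y*(1-a) < (1-x)*(1-b)) \<or> (x*b \<ge> a*(1-y) \<and> y < 1-b)
     \<or> (x < a \<and> y*(1-a) \<ge> (1-x)*(1-b)) \<or> (x \<ge> a \<and> y \<ge> 1-b)"
proof -
  have id: "b*(1-b) - y*b*(1-a) - a*(1-y)*(1-b) = (b-a)*(1-b-y)" by (simp add: algebra_simps)
  have pos: "(b-a)*(1-b-y) < 0 \<longleftrightarrow> 1 - b - y < 0" using assms by (simp add: mult_less_0_iff)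
  have pos2: "(b-a)*(1-b-y) > 0 \<longleftrightarrow> 1 - b - y > 0" using assms by (simp add: zero_less_mult_iff)
  show ?thesis
  proof (cases "x*b < a*(1-y)")
    case True
    then have t1: "x*b*(1-b) < a*(1-y)*(1-b)" using assms by simp
    show ?thesis
    proof (cases "y*(1-a) \<ge> (1-x)*(1-b)")
      case True
      then have "y*(1-a)*b \<ge> (1-x)*(1-b)*b" using assms by (simp add: mult_right_mono)
      then have "y \<ge> 1 - b" using t1 id pos2 by (simp add: algebra_simps)
      then show ?thesis using True by (cases "x < a") auto
    qed (use \<open>x*b < a*(1-y)\<close> in auto)
  next
    case False
    then have t1: "x*b*(1-b) \<ge> a*(1-y)*(1-b)" using assms by simp
    show ?thesis
    proof (cases "y < 1 - b")
      case True
      then show ?thesis using False by auto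
    next
      case F2: False
      show ?thesis
      proof (cases "y*(1-a) \<ge> (1-x)*(1-b)")
        case True
        show ?thesis using True F2 by (cases "x < a") auto
      next
        case False
        then have "y*(1-a)*b < (1-x)*(1-b)*b" using assms by simp
        then have "(b-a)*(1-b-y) > 0" using t1 by (simp add: algebra_simps)
        then have "y < 1 - b" using pos2 by simp
        then show ?thesis using F2 by auto
      qed
    qed
  qed
qed


lemma classify:
  fixes a b x y rw rm :: real
  assumes e: "eqR a b x y rw rm" and "0 < a" "a < b" "b < 1" "0 \<le> x" "0 \<le> y" "x + y < 1"
  shows "(x*b < a*(1-y) \<and> y*(1-a) < (1-x)*(1-b) \<and>
            rw = a - x/(1-x-y)*(b-a) \<and> rm = b + y/(1-x-y)*(b-a))
       \<or> (x*b \<ge> a*(1-y) \<and> y < 1-b \<and> rw = 0 \<and> rm = b/(1-y))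
       \<or> (x < a \<and> y*(1-a) \<ge> (1-x)*(1-b) \<and> rw = (a-x)/(1-x) \<and> rm = 1)
       \<or> (x \<ge> a \<and> y \<ge> 1-b \<and> rw = 0 \<and> rm = 1)"
proof -
  have rw: "rw = 0 \<or> (0 < rw \<and> rw < 1) \<or> rw = 1" and rm: "rm = 0 \<or> (0 < rm \<and> rm < 1) \<or> rm = 1"
    using e unfolding eqR_def by auto
  have xy1: "1 - x - y > 0" "1 - y > 0" "1 - x > 0" using assms by auto
  from rw show ?thesis
  proof (elim disjE)
    assume w0: "rw = 0"
    from rm show ?thesis
    proof (elim disjE)
      assume "rm = 0" then show ?thesis using e w0 \<open>0 < a\<close> unfolding eqR_def by auto
    next
      assume m: "0 < rm \<and> rm < 1"
      then have eq: "rm - b = y * rm" and ax: "a \<le> x * rm" using e w0 unfolding eqR_def by auto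
      then have rmv: "rm = b/(1-y)" using xy1 by (simp add: field_simps)
      have "x*b \<ge> a*(1-y)"
      proof -
        have "a*(1-y) \<le> x*rm*(1-y)" using ax xy1 by (simp add: mult_right_mono)
        also have "x*rm*(1-y) = x*b"
        proof -
          have "rm*(1-y) = b" using eq by (simp add: algebra_simps)
          then show ?thesis by (metis mult.assoc)
        qed
        finally show ?thesis .
      qed
      moreover have "y < 1 - b"
      proof -
        have "b = rm*(1-y)" using eq by (simp add: algebra_simps)
        also have "rm*(1-y) < 1*(1-y)" using m xy1 by (intro mult_strict_right_mono) auto
        finally show ?thesis by simp
      qed
      ultimately show ?thesis using w0 rmv by auto
    next
      assume "rm = 1" then show ?thesis using e w0 unfolding eqR_def by auto
    qed
  next
    assume w: "0 < rw \<and> rw < 1"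
    from rm show ?thesis
    proof (elim disjE)
      assume m0: "rm = 0"
      then have eq: "a - rw = - x * rw" and hb: "b \<le> y * rw" using e w unfolding eqR_def by auto
      have "y * rw \<le> (1 - x) * rw" using w xy1 by (intro mult_right_mono) auto
      then have "b \<le> a" using eq hb by (simp add: algebra_simps)
      then show ?thesis using \<open>a < b\<close> by simp
    next
      assume m: "0 < rm \<and> rm < 1"
      then have e1: "a - rw = x * (rm - rw)" and e2: "rm - b = y * (rm - rw)" using e w unfolding eqR_def by auto
      have "(rm-rw)*(1-x-y) = b-a" using e1 e2 by (simp add: algebra_simps)
      then have D: "rm - rw = (b-a)/(1-x-y)" using xy1 by (simp add: eq_divide_eq)
      have rwv: "rw = a - x/(1-x-y)*(b-a)" using e1 D by simp
      have rmv: "rm = b + y/(1-x-y)*(b-a)" using e2 D by simp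
      have "x*b < a*(1-y)"
      proof -
        have "0 < rw * (1-x-y)" using w xy1 by simp
        also have "rw * (1-x-y) = a*(1-y) - x*b" unfolding rwv using xy1 by (simp add: field_simps)
        finally show ?thesis by simp
      qed
      moreover have "y*(1-a) < (1-x)*(1-b)"
      proof -
        have "0 < (1-rm) * (1-x-y)" using m xy1 by simp
        also have "(1-rm) * (1-x-y) = (1-x)*(1-b) - y*(1-a)" unfolding rmv using xy1 by (simp add: field_simps)
        finally show ?thesis by simp
      qed
      ultimately show ?thesis using rwv rmv by auto
    next
      assume m1: "rm = 1"
      then have eq: "a - rw = x * (1 - rw)" and hb: "1 - b \<le> y * (1 - rw)" using e w unfolding eqR_def by auto
      have "rw*(1-x) = a-x" using eq by (simp add: algebra_simps)
      then have rwv: "rw = (a-x)/(1-x)" using xy1 by (simp add: eq_divide_eq)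
      have "x < a" using w rwv xy1 by (simp add: field_simps)
      moreover have "y*(1-a) \<ge> (1-x)*(1-b)"
      proof -
        have "1 - rw = (1-a)/(1-x)" unfolding rwv using xy1 by (simp add: field_simps)
        then have "(1-x)*(1-b) \<le> (1-x) * (y * ((1-a)/(1-x)))" using hb xy1 by (intro mult_left_mono) auto
        then show ?thesis using xy1 by simp
      qed
      ultimately show ?thesis using rwv m1 by auto
    qed
  next
    assume w1: "rw = 1"
    from rm show ?thesis
    proof (elim disjE)
      assume "rm = 0" then show ?thesis using e w1 assms unfolding eqR_def by auto
    next
      assume m: "0 < rm \<and> rm < 1"
      then have eq: "rm - b = y * (rm - 1)" and ax: "1 - a \<le> x * (1 - rm)" using e w1 unfolding eqR_def by auto
      have "x * (1 - rm) \<le> (1 - y) * (1 - rm)" using m xy1 by (intro mult_right_mono) auto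
      then have "1 - a \<le> 1 - b" using eq ax by (simp add: algebra_simps)
      then show ?thesis using \<open>a < b\<close> by simp
    next
      assume "rm = 1" then show ?thesis using e w1 assms unfolding eqR_def by auto
    qed
  qed
qed


lemma exist_pts:
  fixes a b x y :: real
  assumes "0 < a" "a < b" "b < 1" "0 \<le> x" "0 \<le> y" "x + y < 1"
  shows "x*b < a*(1-y) \<and> y*(1-a) < (1-x)*(1-b) \<Longrightarrow> eqR a b x y (a - x/(1-x-y)*(b-a)) (b + y/(1-x-y)*(b-a))"
    and "x*b \<ge> a*(1-y) \<and> y < 1-b \<Longrightarrow> eqR a b x y 0 (b/(1-y))"
    and "x < a \<and> y*(1-a) \<ge> (1-x)*(1-b) \<Longrightarrow> eqR a b x y ((a-x)/(1-x)) 1"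
    and "x \<ge> a \<and> y \<ge> 1-b \<Longrightarrow> eqR a b x y 0 1"
proof -
  have xy1: "1 - x - y > 0" "1 - y > 0" "1 - x > 0" using assms by auto
  show "eqR a b x y (a - x/(1-x-y)*(b-a)) (b + y/(1-x-y)*(b-a))" if h: "x*b < a*(1-y) \<and> y*(1-a) < (1-x)*(1-b)"
  proof -
    define D where "D = (b-a)/(1-x-y)"
    have D0: "D > 0" unfolding D_def using assms xy1 by simp
    have rw0: "a - x*D > 0"
    proof -
      have "(a - x*D)*(1-x-y) = a*(1-y) - x*b" unfolding D_def using xy1 by (simp add: field_simps)
      then have "(a - x*D)*(1-x-y) > 0" using h by simp
      then show ?thesis using xy1 by (simp add: zero_less_mult_iff)
    qed
    have rm1: "b + y*D < 1"
    proof -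
      have "(1 - (b + y*D))*(1-x-y) = (1-x)*(1-b) - y*(1-a)" unfolding D_def using xy1 by (simp add: field_simps)
      then have "(1 - (b + y*D))*(1-x-y) > 0" using h by simp
      then show ?thesis using xy1 by (simp add: zero_less_mult_iff)
    qed
    have "x*D \<ge> 0" "y*D \<ge> 0" using D0 assms by auto
    then have rng: "0 < a - x*D" "a - x*D < 1" "0 < b + y*D" "b + y*D < 1" using rw0 rm1 assms by auto
    have Dm: "D*(1-x-y) = b-a" unfolding D_def using xy1 by simp
    have diff: "(b + y*D) - (a - x*D) = D" using Dm by (simp add: algebra_simps)
    have "eqR a b x y (a - x*D) (b + y*D)" unfolding eqR_def using rng diff by (auto simp: algebra_simps)
    then show ?thesis unfolding D_def by (simp add: mult.commute)
  qed
  show "eqR a b x y 0 (b/(1-y))" if h: "x*b \<ge> a*(1-y) \<and> y < 1-b"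
  proof -
    have r1: "b/(1-y) < 1" "0 < b/(1-y)" using h xy1 assms by (simp_all add: field_simps)
    have e: "b/(1-y) - b = y * (b/(1-y))" using xy1 by (simp add: field_simps)
    have "a \<le> x * (b/(1-y))" using h xy1 by (simp add: field_simps)
    then show ?thesis unfolding eqR_def using r1 e by auto
  qed
  show "eqR a b x y ((a-x)/(1-x)) 1" if h: "x < a \<and> y*(1-a) \<ge> (1-x)*(1-b)"
  proof -
    have r1: "(a-x)/(1-x) < 1" "0 < (a-x)/(1-x)" using h xy1 assms by (simp_all add: field_simps)
    have e: "a - (a-x)/(1-x) = x * (1 - (a-x)/(1-x))" using xy1 by (simp add: field_simps)
    have o: "1 - (a-x)/(1-x) = (1-a)/(1-x)" using xy1 by (simp add: field_simps)
    have "1 - b \<le> y * ((1-a)/(1-x))" using h xy1 by (simp add: field_simps)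
    then show ?thesis unfolding eqR_def using r1 e o by auto
  qed
  show "eqR a b x y 0 1" if h: "x \<ge> a \<and> y \<ge> 1-b"
    using h assms unfolding eqR_def by auto
qed

lemma gfun_eq:
  assumes h: "\<forall>u. 0 < u \<and> u \<le> 1 \<longrightarrow> hh u = c / u" and "0 < x" "x < 1" "0 \<le> y" "y \<le> 1" "z > 0"
  shows "gfun hh x y z = c * z * (y - x) / (x * (1 - x))"
proof -
  have p1: "z * y / x \<ge> 0" "z * (1-y) / (1-x) \<ge> 0" using assms by auto
  have h1: "hh (1 / (1 + z * y / x)) = c * (1 + z * y / x)"
    using h[rule_format, of "1 / (1 + z * y / x)"] p1 by (simp add: field_simps)
  have h2: "hh (1 / (1 + z * (1-y) / (1-x))) = c * (1 + z * (1-y) / (1-x))"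
    using h[rule_format, of "1 / (1 + z * (1-y) / (1-x))"] p1 by (simp add: field_simps)
  have "gfun hh x y z = c * (1 + z * y / x) - c * (1 + z * (1-y) / (1-x))"
    unfolding gfun_def h1 h2 by simp
  also have "\<dots> = c * z * (y - x) / (x * (1 - x))"
    using assms(2,3) by (simp add: field_simps)
  finally show ?thesis .
qed

lemma lim_lemma:
  fixes a g y :: real and P :: "real \<Rightarrow> bool"
  assumes "0 \<le> g" "g < 1" and P: "\<forall>d. 0 < d \<and> d < 1 \<longrightarrow> (P d \<longleftrightarrow> a - d \<le> g * (y - d))"
  shows "(\<exists>db>0. \<forall>d. 0 < d \<and> d < db \<longrightarrow> P d) \<longleftrightarrow> a \<le> g * y"
proof
  assume "\<exists>db>0. \<forall>d. 0 < d \<and> d < db \<longrightarrow> P d"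
  then obtain db where db: "db > 0" "\<forall>d. 0 < d \<and> d < db \<longrightarrow> P d" by auto
  show "a \<le> g * y"
  proof (rule ccontr)
    assume "\<not> a \<le> g * y"
    define d where "d = min (db/2) (min (1/2) ((a - g*y)/2))"
    have d: "0 < d" "d < db" "d < 1" using db \<open>\<not> a \<le> g * y\<close> unfolding d_def by auto
    have d4: "d \<le> (a - g*y)/2" unfolding d_def by (rule order_trans[OF min.cobounded2 min.cobounded2])
    have "a - d \<le> g * (y - d)" using d db P by auto
    moreover have "g * d \<le> d" using d assms by (simp add: mult_left_le_one_le)
    ultimately have h1: "a - g*y \<le> d - g*d" by (simp add: algebra_simps)
    have h2: "g*d \<ge> 0" using assms d by simp
    have h3: "2*d \<le> a - g*y" using d4 by simp
    from h1 h2 h3 d(1) show False by linarith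
  qed
next
  assume "a \<le> g * y"
  show "\<exists>db>0. \<forall>d. 0 < d \<and> d < db \<longrightarrow> P d"
  proof (intro exI[of _ 1] conjI allI impI)
    fix d :: real assume d: "0 < d \<and> d < 1"
    have gd: "g * d \<le> d" using d assms by (simp add: mult_left_le_one_le)
    have "a - d \<le> g * (y - d)" using gd \<open>a \<le> g * y\<close> by (simp add: right_diff_distrib)
    then show "P d" using P d by blast
  qed simp
qed


lemma key:
  fixes C K A B u :: real
  assumes "C > 0" "0 < u" "u < 1"
  shows "(C*(A-u)/(u*(1-u)) = K*(B-u)/(u*(1-u))) \<longleftrightarrow> A-u = (K/C)*(B-u)"
    and "(C*(A-u)/(u*(1-u)) \<le> K*(B-u)/(u*(1-u))) \<longleftrightarrow> A-u \<le> (K/C)*(B-u)"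
    and "(K*(B-u)/(u*(1-u)) \<le> C*(A-u)/(u*(1-u))) \<longleftrightarrow> (K/C)*(B-u) \<le> A-u"
proof -
  have q: "u*(1-u) > 0" using assms by simp
  have kb: "K*(B-u) = C*((K/C)*(B-u))" using assms by simp
  have i1: "\<And>X Y. (X/(u*(1-u)) = Y/(u*(1-u))) \<longleftrightarrow> X = Y" using assms by simp
  have i2: "\<And>X Y. (X/(u*(1-u)) \<le> Y/(u*(1-u))) \<longleftrightarrow> X \<le> Y" using q by (simp add: divide_le_cancel)
  show "(C*(A-u)/(u*(1-u)) = K*(B-u)/(u*(1-u))) \<longleftrightarrow> A-u = (K/C)*(B-u)"
    unfolding i1 using assms by (auto simp: field_simps)
  show "(C*(A-u)/(u*(1-u)) \<le> K*(B-u)/(u*(1-u))) \<longleftrightarrow> A-u \<le> (K/C)*(B-u)"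
    unfolding i2 using assms by (simp add: pos_le_divide_eq pos_divide_le_eq mult.commute)
  show "(K*(B-u)/(u*(1-u)) \<le> C*(A-u)/(u*(1-u))) \<longleftrightarrow> (K/C)*(B-u) \<le> A-u"
    unfolding i2 using assms by (simp add: pos_le_divide_eq pos_divide_le_eq mult.commute)
qed

lemma equil_iff:
  fixes hw hm Fw Fm :: "real \<Rightarrow> real" and r rew rem cw cm Cw Cm gw gm :: real
  assumes "r > 0" "Cw > 0" "Cm > 0"
    and hw: "\<forall>u. 0 < u \<and> u \<le> 1 \<longrightarrow> hw u = cw / u"
    and hm: "\<forall>u. 0 < u \<and> u \<le> 1 \<longrightarrow> hm u = cm / u"
    and Fw: "\<forall>u. 0 < u \<and> u < 1 \<longrightarrow> Fw (1 - u) = Cw * (rew - u) / (u * (1 - u))"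
    and Fm: "\<forall>u. 0 < u \<and> u < 1 \<longrightarrow> Fm (1 - u) = Cm * (rem - u) / (u * (1 - u))"
    and gw: "gw = cw * (1/r) / Cw" and gm: "gm = cm * r / Cm"
    and "0 \<le> gw" "gw < 1" "0 \<le> gm" "gm < 1"
  shows "equilibrium hw hm Fw Fm r rw rm \<longleftrightarrow> eqR rew rem gw gm rw rm"
proof (cases "rw \<in> {0..1} \<and> rm \<in> {0..1}")
  case False then show ?thesis unfolding equilibrium_def eqR_def by auto
next
  case True
  have zw: "1/r > 0" using assms by simp
  have c1: "rw \<in> {0<..<1} \<longrightarrow> (Fw (1 - rw) = gfun hw rw rm (1 / r) \<longleftrightarrow> rew - rw = gw * (rm - rw))"
  proof
    assume w: "rw \<in> {0<..<1}"
    have "gfun hw rw rm (1/r) = (cw * (1/r)) * (rm - rw) / (rw * (1 - rw))"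
      using gfun_eq[OF hw _ _ _ _ zw] w True by auto
    moreover have "Fw (1 - rw) = Cw * (rew - rw) / (rw * (1 - rw))" using Fw w by auto
    ultimately show "Fw (1 - rw) = gfun hw rw rm (1 / r) \<longleftrightarrow> rew - rw = gw * (rm - rw)"
      using key(1)[where C=Cw and u=rw and A=rew and K="cw * (1/r)" and B=rm] w assms gw by auto
  qed
  have c2: "rm \<in> {0<..<1} \<longrightarrow> (Fm (1 - rm) = gfun hm rm rw r \<longleftrightarrow> (1 - rem) - (1 - rm) = gm * ((1 - rw) - (1 - rm)))"
  proof
    assume m: "rm \<in> {0<..<1}"
    have "gfun hm rm rw r = (cm * r) * (rw - rm) / (rm * (1 - rm))"
      using gfun_eq[OF hm _ _ _ _ \<open>r > 0\<close>] m True by auto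
    moreover have "Fm (1 - rm) = Cm * (rem - rm) / (rm * (1 - rm))" using Fm m by auto
    moreover have "(rem - rm = gm * (rw - rm)) \<longleftrightarrow> (1 - rem) - (1 - rm) = gm * ((1 - rw) - (1 - rm))"
      by (auto simp: algebra_simps)
    ultimately show "Fm (1 - rm) = gfun hm rm rw r \<longleftrightarrow> (1 - rem) - (1 - rm) = gm * ((1 - rw) - (1 - rm))"
      using key(1)[where C=Cm and u=rm and A=rem and K="cm * r" and B=rw] m assms gm by auto
  qed
  have c3: "(\<exists>db>0. \<forall>d. 0 < d \<and> d < db \<longrightarrow> Fw (1 - d) \<le> gfun hw d rm (1 / r)) \<longleftrightarrow> rew \<le> gw * rm"
  proof (rule lim_lemma)
    show "\<forall>d. 0 < d \<and> d < 1 \<longrightarrow> (Fw (1 - d) \<le> gfun hw d rm (1 / r) \<longleftrightarrow> rew - d \<le> gw * (rm - d))"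
    proof (intro allI impI)
      fix d :: real assume d: "0 < d \<and> d < 1"
      have "gfun hw d rm (1/r) = (cw * (1/r)) * (rm - d) / (d * (1 - d))"
        using gfun_eq[OF hw _ _ _ _ zw] d True by auto
      moreover have "Fw (1 - d) = Cw * (rew - d) / (d * (1 - d))" using Fw d by auto
      ultimately show "Fw (1 - d) \<le> gfun hw d rm (1 / r) \<longleftrightarrow> rew - d \<le> gw * (rm - d)"
        using key(2)[where C=Cw and u=d and A=rew and K="cw * (1/r)" and B=rm] d assms gw by auto
    qed
  qed (use assms in auto)
  have c4: "(\<exists>db>0. \<forall>d. 0 < d \<and> d < db \<longrightarrow> Fm (1 - d) \<le> gfun hm d rw r) \<longleftrightarrow> rem \<le> gm * rw"
  proof (rule lim_lemma)
    show "\<forall>d. 0 < d \<and> d < 1 \<longrightarrow> (Fm (1 - d) \<le> gfun hm d rw r \<longleftrightarrow> rem - d \<le> gm * (rw - d))"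
    proof (intro allI impI)
      fix d :: real assume d: "0 < d \<and> d < 1"
      have "gfun hm d rw r = (cm * r) * (rw - d) / (d * (1 - d))"
        using gfun_eq[OF hm _ _ _ _ \<open>r > 0\<close>] d True by auto
      moreover have "Fm (1 - d) = Cm * (rem - d) / (d * (1 - d))" using Fm d by auto
      ultimately show "Fm (1 - d) \<le> gfun hm d rw r \<longleftrightarrow> rem - d \<le> gm * (rw - d)"
        using key(2)[where C=Cm and u=d and A=rem and K="cm * r" and B=rw] d assms gm by auto
    qed
  qed (use assms in auto)
  have c5: "(\<exists>db>0. \<forall>d. 0 < d \<and> d < db \<longrightarrow> Fw d \<ge> gfun hw (1 - d) rm (1 / r)) \<longleftrightarrow> 1 - rew \<le> gw * (1 - rm)"
  proof (rule lim_lemma)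
    show "\<forall>d. 0 < d \<and> d < 1 \<longrightarrow> (Fw d \<ge> gfun hw (1 - d) rm (1 / r) \<longleftrightarrow> (1 - rew) - d \<le> gw * ((1 - rm) - d))"
    proof (intro allI impI)
      fix d :: real assume d: "0 < d \<and> d < 1"
      define u where "u = 1 - d"
      have u: "0 < u" "u < 1" "d = 1 - u" using d u_def by auto
      have "gfun hw u rm (1/r) = (cw * (1/r)) * (rm - u) / (u * (1 - u))"
        using gfun_eq[OF hw _ _ _ _ zw] u True by auto
      moreover have "Fw (1 - u) = Cw * (rew - u) / (u * (1 - u))" using Fw u by auto
      moreover have "(cw * (1/r)) * (rm - u) / (u * (1 - u)) \<le> Cw * (rew - u) / (u * (1 - u)) \<longleftrightarrow>
           gw * (rm - u) \<le> rew - u"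
        using key(3)[where C=Cw and u=u and A=rew and K="cw * (1/r)" and B=rm] u assms gw by simp
      moreover have "gw * (rm - u) \<le> rew - u \<longleftrightarrow> (1 - rew) - d \<le> gw * ((1 - rm) - d)"
        unfolding u(3) by (simp add: algebra_simps)
      ultimately show "Fw d \<ge> gfun hw (1 - d) rm (1 / r) \<longleftrightarrow> (1 - rew) - d \<le> gw * ((1 - rm) - d)"
        using u by simp
    qed
  qed (use assms in auto)
  have c6: "(\<exists>db>0. \<forall>d. 0 < d \<and> d < db \<longrightarrow> Fm d \<ge> gfun hm (1 - d) rw r) \<longleftrightarrow> 1 - rem \<le> gm * (1 - rw)"
  proof (rule lim_lemma)
    show "\<forall>d. 0 < d \<and> d < 1 \<longrightarrow> (Fm d \<ge> gfun hm (1 - d) rw r \<longleftrightarrow> (1 - rem) - d \<le> gm * ((1 - rw) - d))"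
    proof (intro allI impI)
      fix d :: real assume d: "0 < d \<and> d < 1"
      define u where "u = 1 - d"
      have u: "0 < u" "u < 1" "d = 1 - u" using d u_def by auto
      have "gfun hm u rw r = (cm * r) * (rw - u) / (u * (1 - u))"
        using gfun_eq[OF hm _ _ _ _ \<open>r > 0\<close>] u True by auto
      moreover have "Fm (1 - u) = Cm * (rem - u) / (u * (1 - u))" using Fm u by auto
      moreover have "(cm * r) * (rw - u) / (u * (1 - u)) \<le> Cm * (rem - u) / (u * (1 - u)) \<longleftrightarrow>
           gm * (rw - u) \<le> rem - u"
        using key(3)[where C=Cm and u=u and A=rem and K="cm * r" and B=rw] u assms gm by simp
      moreover have "gm * (rw - u) \<le> rem - u \<longleftrightarrow> (1 - rem) - d \<le> gm * ((1 - rw) - d)"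
        unfolding u(3) by (simp add: algebra_simps)
      ultimately show "Fm d \<ge> gfun hm (1 - d) rw r \<longleftrightarrow> (1 - rem) - d \<le> gm * ((1 - rw) - d)"
        using u by simp
    qed
  qed (use assms in auto)
  show ?thesis unfolding equilibrium_def eqR_def using True c1 c2 c3 c4 c5 c6 by auto
qed


lemma excl:
  fixes a b x y :: real
  assumes "0 < a" "a < b" "b < 1" "0 \<le> x" "0 \<le> y" "x + y < 1"
  shows "\<not> (x*b < a*(1-y) \<and> x \<ge> a \<and> y \<ge> 1-b)"
    and "\<not> (x*b \<ge> a*(1-y) \<and> y < 1-b \<and> x < a)"
proof
  assume h: "x*b < a*(1-y) \<and> x \<ge> a \<and> y \<ge> 1-b"
  have "a*(1-y) \<le> a*b" using h assms by (intro mult_left_mono) auto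
  moreover have "a*b \<le> x*b" using h assms by (intro mult_right_mono) auto
  ultimately show False using h by linarith
next
  show "\<not> (x*b \<ge> a*(1-y) \<and> y < 1-b \<and> x < a)"
  proof
    assume h: "x*b \<ge> a*(1-y) \<and> y < 1-b \<and> x < a"
    have "a*b < a*(1-y)" using h assms by (intro mult_strict_left_mono) auto
    moreover have "x*b < a*b" using h assms by (intro mult_strict_right_mono) auto
    ultimately show False using h by linarith
  qed
qed

lemma unique_eq:
  fixes a b x y :: real
  assumes "0 < a" "a < b" "b < 1" "0 \<le> x" "0 \<le> y" "x + y < 1"
    and "eqR a b x y rw rm" "eqR a b x y rw' rm'"
  shows "rw = rw' \<and> rm = rm'"
  using classify[OF assms(7,1-6)] classify[OF assms(8,1-6)] excl[OF assms(1-6)] by auto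

lemma final_arith:
  fixes a b x y :: real
  assumes "0 < a" "a < b" "b < 1" "0 \<le> x" "0 \<le> y" "x + y < 1"
    and e: "eqR a b x y rw rm"
  shows "(max (x * b / a + y) (x + y * (1 - a) / (1 - b)) < 1 \<longrightarrow>
         rw = a - x / (1 - x - y) * (b - a) \<and>
         rm = b + y / (1 - x - y) * (b - a)) \<and>
      (x * b / a + y \<ge> 1 \<and> y < 1 - b \<longrightarrow>
         rw = 0 \<and> rm = b / (1 - y)) \<and>
      (x < a \<and> x + y * (1 - a) / (1 - b) \<ge> 1 \<longrightarrow>
         rw = (a - x) / (1 - x) \<and> rm = 1) \<and>
      (x \<ge> a \<and> y \<ge> 1 - b \<longrightarrow> rw = 0 \<and> rm = 1)"
proof -
  have P: "x * b / a + y < 1 \<longleftrightarrow> x*b < a*(1-y)" using assms by (simp add: field_simps)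
  have Q: "x + y * (1 - a) / (1 - b) < 1 \<longleftrightarrow> y*(1-a) < (1-x)*(1-b)" using assms by (simp add: field_simps)
  have P': "x * b / a + y \<ge> 1 \<longleftrightarrow> \<not> x*b < a*(1-y)" using P by linarith
  have Q': "x + y * (1 - a) / (1 - b) \<ge> 1 \<longleftrightarrow> \<not> y*(1-a) < (1-x)*(1-b)" using Q by linarith
  show ?thesis
    using classify[OF e assms(1-6)] excl[OF assms(1-6)] P Q P' Q'
    by (auto simp del: linorder_not_less)
qed

theorem proposition3:
  fixes hw hm Fw Fm :: "real \<Rightarrow> real"
    and \<mu>w \<mu>m rew rem cw cm Cw Cm \<gamma>w \<gamma>m :: real
  assumes "\<mu>w > 0" and "\<mu>m > 0"
    and "cw \<ge> 0" and "cm \<ge> 0" and "Cw > 0" and "Cm > 0"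
    and hw: "\<forall>u. 0 < u \<and> u \<le> 1 \<longrightarrow> hw u = cw / u"
    and hm: "\<forall>u. 0 < u \<and> u \<le> 1 \<longrightarrow> hm u = cm / u"
    and Fw: "\<forall>u. 0 < u \<and> u < 1 \<longrightarrow> Fw (1 - u) = Cw * (rew - u) / (u * (1 - u))"
    and Fm: "\<forall>u. 0 < u \<and> u < 1 \<longrightarrow> Fm (1 - u) = Cm * (rem - u) / (u * (1 - u))"
    and "\<gamma>w = (\<mu>m / \<mu>w) * (cw / Cw)"
    and "\<gamma>m = (\<mu>w / \<mu>m) * (cm / Cm)"
    and "0 < rew" and "rew < rem" and "rem < 1"
    and "\<gamma>w + \<gamma>m < 1"
  shows "(\<exists>!p. equilibrium hw hm Fw Fm (\<mu>w / \<mu>m) (fst p) (snd p)) \<and>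
    (\<forall>rw rm. equilibrium hw hm Fw Fm (\<mu>w / \<mu>m) rw rm \<longrightarrow>
      (max (\<gamma>w * rem / rew + \<gamma>m) (\<gamma>w + \<gamma>m * (1 - rew) / (1 - rem)) < 1 \<longrightarrow>
         rw = rew - \<gamma>w / (1 - \<gamma>w - \<gamma>m) * (rem - rew) \<and>
         rm = rem + \<gamma>m / (1 - \<gamma>w - \<gamma>m) * (rem - rew)) \<and>
      (\<gamma>w * rem / rew + \<gamma>m \<ge> 1 \<and> \<gamma>m < 1 - rem \<longrightarrow>
         rw = 0 \<and> rm = rem / (1 - \<gamma>m)) \<and>
      (\<gamma>w < rew \<and> \<gamma>w + \<gamma>m * (1 - rew) / (1 - rem) \<ge> 1 \<longrightarrow>
         rw = (rew - \<gamma>w) / (1 - \<gamma>w) \<and> rm = 1) \<and>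
      (\<gamma>w \<ge> rew \<and> \<gamma>m \<ge> 1 - rem \<longrightarrow> rw = 0 \<and> rm = 1))"
proof -
  define r where "r = \<mu>w / \<mu>m"
  have r0: "r > 0" unfolding r_def using assms by simp
  have gw: "\<gamma>w = cw * (1/r) / Cw" unfolding r_def using assms by (simp add: field_simps)
  have gm: "\<gamma>m = cm * r / Cm" unfolding r_def using assms by (simp add: field_simps)
  have gw0: "\<gamma>w \<ge> 0" using assms by simp
  have gm0: "\<gamma>m \<ge> 0" using assms by simp
  have gw1: "\<gamma>w < 1" "\<gamma>m < 1" using gw0 gm0 assms by linarith+
  have E: "\<And>rw rm. equilibrium hw hm Fw Fm r rw rm \<longleftrightarrow> eqR rew rem \<gamma>w \<gamma>m rw rm"
    by (rule equil_iff[OF r0 assms(5,6) hw hm Fw Fm gw gm gw0 gw1(1) gm0 gw1(2)])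
  note base = assms(13,14,15) gw0 gm0 assms(16)
  have ex: "\<exists>p. eqR rew rem \<gamma>w \<gamma>m (fst p) (snd p)"
    using excl_exh[OF base] exist_pts[OF base] by (metis fst_conv snd_conv)
  have ex1: "\<exists>!p. equilibrium hw hm Fw Fm r (fst p) (snd p)"
  proof -
    obtain p where p: "eqR rew rem \<gamma>w \<gamma>m (fst p) (snd p)" using ex by blast
    show ?thesis
    proof (rule ex1I[of _ p])
      show "equilibrium hw hm Fw Fm r (fst p) (snd p)" using p E by simp
    next
      fix q assume "equilibrium hw hm Fw Fm r (fst q) (snd q)"
      then have "eqR rew rem \<gamma>w \<gamma>m (fst q) (snd q)" using E by simp
      then show "q = p" using unique_eq[OF base _ p] by (simp add: prod_eq_iff)
    qed
  qed
  show ?thesis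
    unfolding r_def[symmetric]
    using ex1 E final_arith[OF base] by blast
qed

end
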